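(* Consider an $N$-player game with player set $\mathcal{V}=\{1,\dots,N\}$, where player $i$ has strategy $x_i\in\mathbb{R}^{n_i}$, $n=\sum_{i=1}^N n_i$, $\bm{x}=\mathrm{col}(x_1,\dots,x_N)\in\mathbb{R}^n$, and cost functions $f_i:\mathbb{R}^n\to\mathbb{R}$. Suppose that for all $i\in\mathcal{V}$: (i) the strategy set is $\mathbb{R}^{n_i}$; (ii) $f_i(x_i,x_{-i})$ is convex and continuously differentiable in $x_i$ for every fixed $x_{-i}$; (iii) the pseudogradient $F(\bm{x})=\mathrm{col}(\nabla_1 f_1(\bm{x}),\dots,\nabla_N f_N(\bm{x}))$, with $\nabla_i f_i=\partial f_i/\partial x_i$, is strongly monotone: there is $\mu>0$ with $(\bm{x}-\bm{x}')^T(F(\bm{x})-F(\bm{x}'))\ge \mu\|\bm{x}-\bm{x}'\|^2$ for all $\bm{x},\bm{x}'\in\mathbb{R}^n$. Let $\bm{x}^*$ denote the (unique) Nash equilibrium, which satisfies $F(\bm{x}^* )=0$. Let the action of each player be governed by $$x_i^{(r_i)}+g_i(\xi_i,t)\theta_i=u_i,\qquad i\in\mathcal{V},$$ where $r_i\ge1$, $u_i\in\mathbb{R}^{n_i}$, $\xi_i=\mathrm{col}(x_i,\dot x_i,\dots,x_i^{(r_i-1)})$, $g_i:\mathbb{R}^{n_ir_i}\times[0,\infty)\to\mathbb{R}^{n_i\times m_i}$ is known, locally Lipschitz in $\xi_i$ uniformly in $t$ and continuous in $t$, and $\theta_i\in\mathbb{R}^{m_i}$ is a known constant vector. Let $c_0^i=1,c_1^i,\dots,c_{r_i-2}^i$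 be real numbers such that $s^{r_i-1}+c^i_{r_i-2}s^{r_i-2}+\cdots+c_1^is+c_0^i$ is Hurwitz, and define $$\gamma_i=\sum_{k=0}^{r_i-2}c_k^i x_i^{(k)}+x_i^{(r_i-1)},\qquad x_i^s=\mathrm{col}(\dot x_i,\dots,x_i^{(r_i-1)})\in\mathbb{R}^{n_i(r_i-1)},$$ $K_i^s x_i^s=\sum_{k=0}^{r_i-2}c_k^i x_i^{(k+1)}$, $\bm{\gamma}=\mathrm{col}(\gamma_1,\dots,\gamma_N)$, $\bm{x}^s=\mathrm{col}(x_1^s,\dots,x_N^s)$. Apply the control law $$u_i=-\nabla_i f_i(\gamma_i,\gamma_{-i})+g_i(\xi_i,t)\theta_i-K_i^s x_i^s,\qquad i\in\mathcal{V},$$ where $\nabla_i f_i(\gamma_i,\gamma_{-i})$ denotes $\nabla_i f_i$ evaluated at $\bm{\gamma}$. Then, in the coordinates $(\bm{\gamma},\bm{x}^s)$, the closed-loop system has the unique equilibrium $(\bm{x}^*,\bm{0}_{\sum_{i=1}^N n_i(r_i-1)})$, and this equilibrium is globally exponentially stable.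
   Context: $x_{-i}$ denotes $(x_1,\dots,x_{i-1},x_{i+1},\dots,x_N)$ and $\gamma_{-i}$ analogously. A Nash equilibrium is $\bm{x}^*$ with $f_i(x_i^*,x_{-i}^* )\le f_i(x_i,x_{-i}^* )$ for all $x_i$ and all $i$. In the $(\bm{\gamma},\bm{x}^s)$ coordinates the closed loop reads $\dot{\bm\gamma}=-F(\bm\gamma)$, $\dot x_i^s=A_i^K x_i^s-B_i^s\nabla_i f_i(\bm\gamma)$, where $A_i^K$ is the companion matrix (tensored with $I_{n_i}$) with last row $-c_0^i,\dots,-c_{r_i-2}^i$ and $B_i^s=\mathrm{col}(0,\dots,0,1)\otimes I_{n_i}$. *)

theory Defs
  imports "HOL-Analysis.Analysis"
begin

text \<open>The map
  pl :: 'n => nat assigns each coordinate to its owning player (in {1..N});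
  player i's block is the set of coordinates j with pl j = i, so n_i = card of it.
  A "derivative family" xi :: nat => real^'n stores xi k = x^(k) (componentwise;
  for coordinate j only orders k <= r (pl j) are meaningful).\<close>

definition upd :: "('n \<Rightarrow> nat) \<Rightarrow> nat \<Rightarrow> real^'n \<Rightarrow> real^'n \<Rightarrow> real^'n" where
  "upd pl i x y = (\<chi> j. if pl j = i then y $ j else x $ j)"

definition pseudograd :: "(nat \<Rightarrow> real^'n \<Rightarrow> real) \<Rightarrow> ('n \<Rightarrow> nat) \<Rightarrow> real^'n \<Rightarrow> real^'n" where
  "pseudograd f pl x = (\<chi> j. deriv (\<lambda>s. f (pl j) (x + s *\<^sub>R axis j 1)) 0)"

definition nash_eq :: "nat \<Rightarrow> (nat \<Rightarrow> real^'n \<Rightarrow> real) \<Rightarrow> ('n \<Rightarrow> nat) \<Rightarrow> real^'n \<Rightarrow> bool" where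
  "nash_eq N f pl xs \<longleftrightarrow> (\<forall>i\<in>{1..N}. \<forall>y. f i xs \<le> f i (upd pl i xs y))"

definition hurwitz_monic :: "nat \<Rightarrow> (nat \<Rightarrow> real) \<Rightarrow> bool" where
  "hurwitz_monic m a \<longleftrightarrow>
     (\<forall>z::complex. z ^ m + (\<Sum>k<m. complex_of_real (a k) * z ^ k) = 0 \<longrightarrow> Re z < 0)"

definition gam :: "('n \<Rightarrow> nat) \<Rightarrow> (nat \<Rightarrow> nat) \<Rightarrow> (nat \<Rightarrow> nat \<Rightarrow> real) \<Rightarrow> (nat \<Rightarrow> real^'n) \<Rightarrow> real^'n" where
  "gam pl r c xi = (\<chi> j. (\<Sum>k<r (pl j) - 1. c (pl j) k * xi k $ j) + xi (r (pl j) - 1) $ j)"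

definition Ks :: "('n \<Rightarrow> nat) \<Rightarrow> (nat \<Rightarrow> nat) \<Rightarrow> (nat \<Rightarrow> nat \<Rightarrow> real) \<Rightarrow> (nat \<Rightarrow> real^'n) \<Rightarrow> real^'n" where
  "Ks pl r c xi = (\<chi> j. \<Sum>k<r (pl j) - 1. c (pl j) k * xi (Suc k) $ j)"

text \<open>g_i(xi_i,t) theta_i : g i xi t j l is the (j,l) entry of the n_i x m_i matrix
  (rows j in block i, columns l < m_i).\<close>
definition gtheta :: "('n \<Rightarrow> nat) \<Rightarrow> (nat \<Rightarrow> nat) \<Rightarrow> (nat \<Rightarrow> (nat \<Rightarrow> real^'n) \<Rightarrow> real \<Rightarrow> 'n \<Rightarrow> nat \<Rightarrow> real)
     \<Rightarrow> (nat \<Rightarrow> nat \<Rightarrow> real) \<Rightarrow> (nat \<Rightarrow> real^'n) \<Rightarrow> real \<Rightarrow> real^'n" where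
  "gtheta pl m g \<theta> xi t = (\<chi> j. \<Sum>l<m (pl j). g (pl j) xi t j l * \<theta> (pl j) l)"

definition xi_dist :: "('n \<Rightarrow> nat) \<Rightarrow> (nat \<Rightarrow> nat) \<Rightarrow> nat \<Rightarrow> (nat \<Rightarrow> real^'n) \<Rightarrow> (nat \<Rightarrow> real^'n) \<Rightarrow> real" where
  "xi_dist pl r i xi xi' = sqrt (\<Sum>k<r i. \<Sum>j\<in>{j. pl j = i}. (xi k $ j - xi' k $ j)\<^sup>2)"

definition gmat_dist :: "('n \<Rightarrow> nat) \<Rightarrow> (nat \<Rightarrow> nat) \<Rightarrow> nat \<Rightarrow> ('n \<Rightarrow> nat \<Rightarrow> real) \<Rightarrow> ('n \<Rightarrow> nat \<Rightarrow> real) \<Rightarrow> real" where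
  "gmat_dist pl m i A B = sqrt (\<Sum>j\<in>{j. pl j = i}. \<Sum>l<m i. (A j l - B j l)\<^sup>2)"

definition cl_solution :: "(nat \<Rightarrow> real^'n \<Rightarrow> real) \<Rightarrow> ('n \<Rightarrow> nat) \<Rightarrow> (nat \<Rightarrow> nat) \<Rightarrow> (nat \<Rightarrow> nat \<Rightarrow> real)
     \<Rightarrow> (nat \<Rightarrow> nat) \<Rightarrow> (nat \<Rightarrow> (nat \<Rightarrow> real^'n) \<Rightarrow> real \<Rightarrow> 'n \<Rightarrow> nat \<Rightarrow> real) \<Rightarrow> (nat \<Rightarrow> nat \<Rightarrow> real)
     \<Rightarrow> (nat \<Rightarrow> real \<Rightarrow> real^'n) \<Rightarrow> bool" where
  "cl_solution f pl r c m g \<theta> X \<longleftrightarrow>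
     (\<forall>t\<ge>0. \<forall>j. \<forall>k<r (pl j).
        ((\<lambda>\<tau>. X k \<tau> $ j) has_real_derivative (X (Suc k) t $ j)) (at t within {0..})) \<and>
     (\<forall>t\<ge>0. (\<chi> j. X (r (pl j)) t $ j) + gtheta pl m g \<theta> (\<lambda>k. X k t) t
        = - pseudograd f pl (gam pl r c (\<lambda>k. X k t)) + gtheta pl m g \<theta> (\<lambda>k. X k t) t
          - Ks pl r c (\<lambda>k. X k t))"

definition xs_sq :: "('n::finite \<Rightarrow> nat) \<Rightarrow> (nat \<Rightarrow> nat) \<Rightarrow> (nat \<Rightarrow> real^'n) \<Rightarrow> real" where
  "xs_sq pl r xi = (\<Sum>j\<in>UNIV. \<Sum>k\<in>{1..<r (pl j)}. (xi k $ j)\<^sup>2)"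

definition coord_err :: "('n::finite \<Rightarrow> nat) \<Rightarrow> (nat \<Rightarrow> nat) \<Rightarrow> (nat \<Rightarrow> nat \<Rightarrow> real) \<Rightarrow> real^'n
     \<Rightarrow> (nat \<Rightarrow> real^'n) \<Rightarrow> real" where
  "coord_err pl r c xst xi = sqrt ((norm (gam pl r c xi - xst))\<^sup>2 + xs_sq pl r xi)"

end

theory Submission
  imports Defs "HOL-Complex_Analysis.Cauchy_Integral_Formula"
begin

lemma within_to_at:
  assumes "(f has_derivative f') (at t within {0..})" "t > (0::real)"
  shows "(f has_derivative f') (at t)"
proof -
  have "t \<in> interior {0::real..}" using assms(2) by simp
  then have "at t within {0..} = at t" by (rule at_within_interior)
  then show ?thesis using assms(1) by metis
qed

lemma cont_from_deriv:
  assumes "\<forall>s\<ge>0. (f has_derivative f' s) (at s within {0..})" "(0::real) \<le> t"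
  shows "continuous_on {0..t} f"
proof -
  have "\<forall>x\<in>{0..}. continuous (at x within {0..}) f"
  proof
    fix x :: real assume "x \<in> {0..}"
    then have "(f has_derivative f' x) (at x within {0..})" using assms(1) by simp
    then show "continuous (at x within {0..}) f" by (rule has_derivative_continuous)
  qed
  then have "continuous_on {0..} f"
    unfolding continuous_on_eq_continuous_within .
  then show ?thesis by (rule continuous_on_subset) auto
qed

lemma nonincr_from_deriv:
  fixes h :: "real \<Rightarrow> real"
  assumes "\<forall>s\<ge>0. (h has_real_derivative h' s) (at s within {0..})"
    and "\<forall>s\<ge>0. h' s \<le> 0" and "t \<ge> 0"
  shows "h t \<le> h 0"
proof (cases "t = 0")
  case True then show ?thesis by simp
next
  case False
  then have tp: "t > 0" using assms(3) by simp
  have d: "\<forall>s\<ge>0. (h has_derivative ((*) (h' s))) (at s within {0..})"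
    using assms(1) by (simp add: has_field_derivative_def mult.commute)
  have cont: "continuous_on {0..t} h"
    by (rule cont_from_deriv[OF d assms(3)])
  have der: "\<And>x. 0 < x \<Longrightarrow> x < t \<Longrightarrow> (h has_derivative ((*) (h' x))) (at x)"
  proof -
    fix x :: real assume "0 < x" "x < t"
    then show "(h has_derivative ((*) (h' x))) (at x)"
      using d within_to_at[of h "(*) (h' x)" x] by simp
  qed
  obtain z where z: "0 < z" "z < t" "h t - h 0 = h' z * (t - 0)"
    using mvt[OF tp cont der] by blast
  have "h' z \<le> 0" using assms(2) z(1) by simp
  then have "h' z * t \<le> 0" using tp by (simp add: mult_nonpos_nonneg)
  then show ?thesis using z(3) by simp
qed

lemma vd_within_to_at:
  assumes "(f has_vector_derivative f') (at t within {0..})" "t > (0::real)"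
  shows "(f has_vector_derivative f') (at t)"
  using assms within_to_at unfolding has_vector_derivative_def by blast

lemma first_order_step:
  fixes l :: complex and b a V t :: real and u u' v :: "real \<Rightarrow> complex"
  assumes l: "Re l < 0" and b: "b > 0"
    and ad: "a = min (- Re l) b / 2"
    and du: "\<forall>t\<ge>0. (u has_vector_derivative u' t) (at t within {0..})"
    and eq: "\<forall>t\<ge>0. u' t = l * u t + v t"
    and bv: "\<forall>t\<ge>0. norm (v t) \<le> V * exp (-b*t)"
    and t: "t > 0"
  shows "norm (u t) \<le> exp (-a*t) * (norm (u 0) + V / a)"
proof -
  define \<alpha> where "\<alpha> = - Re l"
  define c where "c = min \<alpha> b"
  have ap: "\<alpha> > 0" using l \<alpha>_def by simp
  have cp: "c > 0" using ap b c_def by simp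
  have ac: "a = c / 2" using ad \<alpha>_def c_def by simp
  have a0: "a > 0" using ac cp by simp
  have "norm (v 0) \<le> V" using bv[rule_format, of 0] by simp
  then have V0: "V \<ge> 0" using norm_ge_zero order_trans by blast
  define E where "E s = exp (- (l * of_real s))" for s :: real
  define \<phi> where "\<phi> s = E s * u s" for s
  have dE: "(E has_vector_derivative (E s * (- l))) (at s within S)" for s S
  proof -
    have "((\<lambda>z. exp (- (l * z))) has_field_derivative (exp (- (l * of_real s)) * (- l))) (at (of_real s))"
      by (auto intro!: derivative_eq_intros)
    from has_vector_derivative_real_field[OF this] show ?thesis unfolding E_def .
  qed
  have dphi: "(\<phi> has_vector_derivative (E s * v s)) (at s within {0..})" if "s \<ge> 0" for s
  proof -
    have "(\<phi> has_vector_derivative (E s * u' s + E s * (- l) * u s)) (at s within {0..})"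
      unfolding \<phi>_def using has_vector_derivative_mult[OF dE du[rule_format, OF that]] .
    moreover have "E s * u' s + E s * (- l) * u s = E s * v s"
      using eq that by (simp add: algebra_simps)
    ultimately show ?thesis by simp
  qed
  have cont: "continuous_on {0..t} \<phi>"
    by (rule continuous_on_vector_derivative[of _ _ "\<lambda>s. E s * v s"])
       (auto intro: has_vector_derivative_within_subset[OF dphi])
  have der: "(\<phi> has_derivative (\<lambda>h. h *\<^sub>R (E x * v x))) (at x)" if "0 < x" "x < t" for x
    using vd_within_to_at[OF dphi that(1)] that unfolding has_vector_derivative_def by simp
  obtain x where x: "x \<in> {0<..<t}" and mv: "norm (\<phi> t - \<phi> 0) \<le> norm ((t - 0) *\<^sub>R (E x * v x))"
    using mvt_general[OF t cont der] by blast
  have nE: "norm (E s) = exp (\<alpha> * s)" for s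
    unfolding E_def \<alpha>_def by simp
  have "norm ((t - 0) *\<^sub>R (E x * v x)) = t * (exp (\<alpha> * x) * norm (v x))"
    using t by (simp add: norm_mult nE)
  also have "\<dots> \<le> t * (exp (\<alpha> * x) * (V * exp (-b*x)))"
    using bv x t by (intro mult_left_mono) auto
  also have "\<dots> = t * V * exp ((\<alpha> - b) * x)"
    by (simp add: algebra_simps exp_add[symmetric])
  also have "\<dots> \<le> t * V * exp ((\<alpha> - c) * t)"
  proof -
    have "(\<alpha> - b) * x \<le> (\<alpha> - c) * x" using x c_def by (intro mult_right_mono) auto
    also have "\<dots> \<le> (\<alpha> - c) * t" using x c_def by (intro mult_left_mono) auto
    finally show ?thesis using t V0 by (intro mult_left_mono) auto
  qed
  finally have b1: "norm (\<phi> t - \<phi> 0) \<le> t * V * exp ((\<alpha> - c) * t)" using mv by simp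
  have phi0: "\<phi> 0 = u 0" unfolding \<phi>_def E_def by simp
  have ut: "u t = exp (l * of_real t) * \<phi> t"
    unfolding \<phi>_def E_def by (simp add: exp_minus field_simps)
  have "norm (u t) = exp (- \<alpha> * t) * norm (\<phi> t)"
    unfolding ut \<alpha>_def by (simp add: norm_mult)
  also have "\<dots> \<le> exp (- \<alpha> * t) * (norm (u 0) + t * V * exp ((\<alpha> - c) * t))"
  proof -
    have "norm (\<phi> t) \<le> norm (\<phi> 0) + norm (\<phi> t - \<phi> 0)" by (rule norm_triangle_sub)
    then show ?thesis using b1 phi0 by (intro mult_left_mono) auto
  qed
  also have "\<dots> = exp (- \<alpha> * t) * norm (u 0) + t * V * exp (- c * t)"
    by (simp add: algebra_simps exp_add[symmetric])
  also have "\<dots> \<le> exp (- a * t) * norm (u 0) + exp (-a * t) * (V / a)"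
  proof -
    have e1: "exp (- \<alpha> * t) \<le> exp (- a * t)" using t ac c_def cp by auto
    have "a * t \<le> exp (a * t)" using exp_ge_add_one_self[of "a*t"] by linarith
    then have "t * exp (- a * t) \<le> 1 / a"
      using a0 by (simp add: exp_minus field_simps)
    moreover have "exp (- c * t) = exp (- a * t) * exp (- a * t)"
      using ac by (simp add: exp_add[symmetric])
    ultimately have "t * exp (- c * t) \<le> exp (- a * t) * (1 / a)"
    proof -
      assume h: "t * exp (- a * t) \<le> 1 / a" "exp (- c * t) = exp (- a * t) * exp (- a * t)"
      have "t * exp (- c * t) = (t * exp (- a * t)) * exp (- a * t)" using h(2) by simp
      also have "\<dots> \<le> (1 / a) * exp (- a * t)" using h(1) by (rule mult_right_mono) simp
      finally show ?thesis by simp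
    qed
    then have "(t * exp (- c * t)) * V \<le> (exp (- a * t) * (1 / a)) * V"
      using V0 by (rule mult_right_mono)
    then have 2: "t * V * exp (- c * t) \<le> exp (- a * t) * (V / a)"
      by (simp add: algebra_simps)
    have 1: "exp (- \<alpha> * t) * norm (u 0) \<le> exp (- a * t) * norm (u 0)"
      using e1 by (rule mult_right_mono) simp
    from add_mono[OF 1 2] show ?thesis .
  qed
  finally show ?thesis by (simp add: algebra_simps)
qed

lemma first_order:
  fixes l :: complex and b :: real
  assumes l: "Re l < 0" and b: "b > 0"
  shows "\<exists>M a. M > 0 \<and> a > 0 \<and> (\<forall>u u' v V.
     (\<forall>t\<ge>0. (u has_vector_derivative u' t) (at t within {0..})) \<and>
     (\<forall>t\<ge>0. u' t = l * u t + v t) \<and> (\<forall>t\<ge>0. norm (v t) \<le> V * exp (-b*t))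
     \<longrightarrow> (\<forall>t\<ge>0. norm (u t) \<le> M * exp (-a*t) * (norm (u 0) + V)))"
proof -
  define a where "a = min (- Re l) b / 2"
  have a0: "a > 0" using l b a_def by simp
  define M where "M = max 1 (1 / a)"
  have M1: "M \<ge> 1" "M \<ge> 1 / a" unfolding M_def by auto
  have "\<forall>u u' v V.
     (\<forall>t\<ge>0. (u has_vector_derivative u' t) (at t within {0..})) \<and>
     (\<forall>t\<ge>0. u' t = l * u t + v t) \<and> (\<forall>t\<ge>0. norm (v t) \<le> V * exp (-b*t))
     \<longrightarrow> (\<forall>t\<ge>0. norm (u t) \<le> M * exp (-a*t) * (norm (u 0) + V))"
  proof (intro allI impI)
    fix u u' v V t
    assume H: "(\<forall>t\<ge>0. (u has_vector_derivative u' t) (at t within {0..})) \<and>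
     (\<forall>t\<ge>0. u' t = l * u t + v t) \<and> (\<forall>t\<ge>0. norm (v t) \<le> V * exp (-b*t))"
      and t: "(0::real) \<le> t"
    have "norm (v 0) \<le> V" using H by auto
    then have V0: "V \<ge> 0" using norm_ge_zero order_trans by blast
    show "norm (u t) \<le> M * exp (-a*t) * (norm (u 0) + V)"
    proof (cases "t = 0")
      case True
      have "1 * (norm (u 0) + V) \<le> M * (norm (u 0) + V)"
        by (rule mult_right_mono) (use M1 V0 in auto)
      then show ?thesis using True V0 by simp
    next
      case False
      then have tp: "t > 0" using t by simp
      have "norm (u t) \<le> exp (-a*t) * (norm (u 0) + V / a)"
        using first_order_step[OF l b a_def _ _ _ tp, of u u' v V] H by blast
      also have "\<dots> \<le> exp (-a*t) * (M * (norm (u 0) + V))"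
      proof (intro mult_left_mono)
        have "(1 / a) * V \<le> M * V" using M1(2) V0 by (rule mult_right_mono)
        then have "V / a \<le> M * V" by simp
        moreover have "1 * norm (u 0) \<le> M * norm (u 0)" using M1(1)
          by (rule mult_right_mono) simp
        ultimately show "norm (u 0) + V / a \<le> M * (norm (u 0) + V)" by (simp add: algebra_simps)
      qed simp
      finally show ?thesis by (simp add: algebra_simps)
    qed
  qed
  then show ?thesis using a0 M1 by (intro exI[of _ M] exI[of _ a]) auto
qed

definition pd :: "complex poly \<Rightarrow> (nat \<Rightarrow> real \<Rightarrow> complex) \<Rightarrow> real \<Rightarrow> complex" where
  "pd P w t = (\<Sum>k\<le>degree P. coeff P k * w k t)"

lemma pd_le:
  assumes "degree P \<le> n"
  shows "pd P w t = (\<Sum>k\<le>n. coeff P k * w k t)"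
  unfolding pd_def
  by (rule sum.mono_neutral_left) (use assms in \<open>auto simp: coeff_eq_0\<close>)

lemma pd_mult_linear:
  "pd ([:-l, 1:] * Q) w t = pd Q (\<lambda>k. w (Suc k)) t - l * pd Q w t"
proof -
  define n where "n = degree Q"
  have d: "degree ([:-l, 1:] * Q) \<le> Suc n"
    unfolding n_def using degree_mult_le[of "[:-l, 1:]" Q] by simp
  have c: "coeff ([:-l, 1:] * Q) k = coeff (pCons 0 Q) k - l * coeff Q k" for k
    by simp
  have "pd ([:-l, 1:] * Q) w t = (\<Sum>k\<le>Suc n. coeff (pCons 0 Q) k * w k t) - l * (\<Sum>k\<le>Suc n. coeff Q k * w k t)"
    unfolding pd_le[OF d] c by (simp add: algebra_simps sum_subtractf sum_distrib_left)
  also have "(\<Sum>k\<le>Suc n. coeff (pCons 0 Q) k * w k t) = (\<Sum>k\<le>n. coeff Q k * w (Suc k) t)"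
    by (subst sum.atMost_Suc_shift) simp
  also have "\<dots> = pd Q (\<lambda>k. w (Suc k)) t" unfolding pd_def n_def ..
  also have "(\<Sum>k\<le>Suc n. coeff Q k * w k t) = pd Q w t"
    using pd_le[of Q "Suc n" w t] n_def by simp
  finally show ?thesis .
qed

lemma pd_deriv:
  assumes "\<forall>k\<le>degree Q. (w k has_vector_derivative w (Suc k) t) (at t within S)"
  shows "((\<lambda>t. pd Q w t) has_vector_derivative pd Q (\<lambda>k. w (Suc k)) t) (at t within S)"
  unfolding pd_def
  by (rule has_vector_derivative_sum) (use assms in \<open>auto intro: has_vector_derivative_mult_right\<close>)

definition casc_hyp :: "nat \<Rightarrow> complex poly \<Rightarrow> real \<Rightarrow> (nat \<Rightarrow> real \<Rightarrow> complex) \<Rightarrow> (real \<Rightarrow> complex)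
   \<Rightarrow> (real \<Rightarrow> complex) \<Rightarrow> (real \<Rightarrow> complex) \<Rightarrow> real \<Rightarrow> bool" where
  "casc_hyp n P b w v e e' V \<longleftrightarrow>
     (\<forall>k<n. \<forall>t\<ge>0. (w k has_vector_derivative w (Suc k) t) (at t within {0..})) \<and>
     (\<forall>t\<ge>0. (e has_vector_derivative e' t) (at t within {0..})) \<and>
     (\<forall>t\<ge>0. pd P w t = v t + e' t) \<and>
     (\<forall>t\<ge>0. norm (v t) \<le> V * exp (-b*t) \<and> norm (e t) \<le> V * exp (-b*t))"

lemma cascade:
  "\<forall>P b. degree P = n \<longrightarrow> lead_coeff P = 1 \<longrightarrow> (\<forall>z. poly P z = 0 \<longrightarrow> Re z < 0) \<longrightarrow> b > 0 \<longrightarrow>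
    (\<exists>M a. M > 0 \<and> a > 0 \<and> (\<forall>w v e e' V. casc_hyp n P b w v e e' V
       \<longrightarrow> (\<forall>t\<ge>0. \<forall>k<n. norm (w k t) \<le> M * exp (-a*t) * ((\<Sum>k<n. norm (w k 0)) + V))))"
proof (induction n)
  case 0
  show ?case
  proof (intro allI impI)
    fix P :: "complex poly" and b :: real
    show "\<exists>M a. M > 0 \<and> a > 0 \<and> (\<forall>w v e e' V. casc_hyp 0 P b w v e e' V
       \<longrightarrow> (\<forall>t\<ge>0. \<forall>k<0. norm (w k t) \<le> M * exp (-a*t) * ((\<Sum>k<0. norm (w k 0)) + V)))"
      by (rule exI[of _ 1], rule exI[of _ 1]) simp
  qed
next
  case (Suc n)
  show ?case
  proof (intro allI impI)
    fix P :: "complex poly" and b :: real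
    assume dP: "degree P = Suc n" and lP: "lead_coeff P = 1" and hP: "\<forall>z. poly P z = 0 \<longrightarrow> Re z < 0"
      and b: "b > 0"
    have "coeff P (Suc n) \<noteq> 0" using lP dP by simp
    then have "coeff P 0 = 0 \<or> (\<exists>i\<in>{1..Suc n}. coeff P i \<noteq> 0)" by auto
    then obtain l where rl: "(\<Sum>i\<le>Suc n. coeff P i * l ^ i) = 0"
      by (rule fundamental_theorem_of_algebra)
    then have pl: "poly P l = 0" unfolding poly_altdef dP .
    then have Rl: "Re l < 0" using hP by blast
    from pl obtain Q where PQ: "P = [:-l, 1:] * Q" unfolding poly_eq_0_iff_dvd by (elim dvdE)
    have Q0: "Q \<noteq> 0" using PQ dP by auto
    have dQ: "degree Q = n" using degree_mult_eq[of "[:-l, 1:]" Q] Q0 PQ dP by simp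
    have lQ: "lead_coeff Q = 1" using lead_coeff_mult[of "[:-l, 1:]" Q] PQ lP by simp
    have hQ: "\<forall>z. poly Q z = 0 \<longrightarrow> Re z < 0" using hP PQ by simp
    from first_order[OF Rl b] obtain M1 a1 where M1a: "M1 > 0 \<and> a1 > 0 \<and> (\<forall>u u' v V.
     (\<forall>t\<ge>0. (u has_vector_derivative u' t) (at t within {0..})) \<and>
     (\<forall>t\<ge>0. u' t = l * u t + v t) \<and> (\<forall>t\<ge>0. norm (v t) \<le> V * exp (-b*t))
     \<longrightarrow> (\<forall>t\<ge>0. norm (u t) \<le> M1 * exp (-a1*t) * (norm (u 0) + V)))"
      by (elim exE) (rule that)
    then have M1: "M1 > 0" "a1 > 0" by simp_all
    from M1a have FO: "\<forall>u u' v V.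
     (\<forall>t\<ge>0. (u has_vector_derivative u' t) (at t within {0..})) \<and>
     (\<forall>t\<ge>0. u' t = l * u t + v t) \<and> (\<forall>t\<ge>0. norm (v t) \<le> V * exp (-b*t))
     \<longrightarrow> (\<forall>t\<ge>0. norm (u t) \<le> M1 * exp (-a1*t) * (norm (u 0) + V))" by (elim conjE)
    define b' where "b' = min a1 b"
    have b'0: "b' > 0" unfolding b'_def using M1(2) b by simp
    have "\<exists>M a. M > 0 \<and> a > 0 \<and> (\<forall>w v e e' V. casc_hyp n Q b' w v e e' V
       \<longrightarrow> (\<forall>t\<ge>0. \<forall>k<n. norm (w k t) \<le> M * exp (-a*t) * ((\<Sum>k<n. norm (w k 0)) + V)))"
      using Suc.IH[rule_format, OF dQ lQ _ b'0] hQ by blast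
    then obtain M2 a2 where M2a: "M2 > 0 \<and> a2 > 0 \<and> (\<forall>w v e e' V. casc_hyp n Q b' w v e e' V
       \<longrightarrow> (\<forall>t\<ge>0. \<forall>k<n. norm (w k t) \<le> M2 * exp (-a2*t) * ((\<Sum>k<n. norm (w k 0)) + V)))"
      by (elim exE) (rule that)
    then have M2: "M2 > 0" "a2 > 0" by simp_all
    from M2a have IH: "\<forall>w v e e' V. casc_hyp n Q b' w v e e' V
       \<longrightarrow> (\<forall>t\<ge>0. \<forall>k<n. norm (w k t) \<le> M2 * exp (-a2*t) * ((\<Sum>k<n. norm (w k 0)) + V))" by (elim conjE)
    define C where "C = (\<Sum>k\<le>n. norm (coeff Q k))"
    have C0: "C \<ge> 0" unfolding C_def by (simp add: sum_nonneg)
    define K where "K = M1 * (C + 2 + norm l) + 1"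
    have K0: "K > 0" unfolding K_def using M1 C0 by (simp add: add_nonneg_pos)
    define M where "M = K + M2 * (1 + K) + C * M2 * (1 + K) + 1"
    define a where "a = min b' a2"
    have a0: "a > 0" unfolding a_def using b'0 M2(2) by simp
    have "M2 * (1 + K) \<ge> 0" "C * M2 * (1 + K) \<ge> 0" using K0 M2 C0 by simp_all
    then have M0: "M > 0" unfolding M_def using K0 by linarith
    have "\<forall>w v e e' V. casc_hyp (Suc n) P b w v e e' V
       \<longrightarrow> (\<forall>t\<ge>0. \<forall>k<Suc n. norm (w k t) \<le> M * exp (-a*t) * ((\<Sum>k<Suc n. norm (w k 0)) + V))"
    proof (intro allI impI)
      fix w v e e' V t k
      assume H: "casc_hyp (Suc n) P b w v e e' V" and t: "(0::real) \<le> t" and k: "k < Suc n"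
      note H = H[unfolded casc_hyp_def]
      define S where "S = (\<Sum>k<Suc n. norm (w k 0)) + V"
      have "norm (v 0) \<le> V" using H by auto
      then have V0: "V \<ge> 0" using norm_ge_zero order_trans by blast
      have wS: "norm (w k 0) \<le> S" if "k \<le> n" for k
      proof -
        have "norm (w k 0) \<le> (\<Sum>k<Suc n. norm (w k 0))"
          by (rule member_le_sum) (use that in auto)
        then show ?thesis unfolding S_def using V0 by simp
      qed
      have VS: "V \<le> S" unfolding S_def by (simp add: sum_nonneg)
      have S0: "S \<ge> 0" using V0 VS by simp
      define u where "u t = pd Q w t" for t
      define ut where "ut t = u t - e t" for t
      have du: "(u has_vector_derivative pd Q (\<lambda>k. w (Suc k)) s) (at s within {0..})" if "s \<ge> 0" for s
        unfolding u_def using pd_deriv[of Q w s "{0..}"] H that dQ by auto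
      have dut: "(ut has_vector_derivative (pd Q (\<lambda>k. w (Suc k)) s - e' s)) (at s within {0..})" if "s \<ge> 0" for s
        unfolding ut_def using has_vector_derivative_diff[OF du[OF that]] H that by auto
      have equ: "pd Q (\<lambda>k. w (Suc k)) s - e' s = l * ut s + (v s + l * e s)" if "s \<ge> 0" for s
      proof -
        have "pd P w s = pd Q (\<lambda>k. w (Suc k)) s - l * u s" unfolding PQ u_def by (rule pd_mult_linear)
        then show ?thesis using H that unfolding ut_def by (auto simp: algebra_simps)
      qed
      have vbd: "norm (v s + l * e s) \<le> ((1 + norm l) * V) * exp (- b * s)" if "s \<ge> 0" for s
      proof -
        have "norm (v s + l * e s) \<le> norm (v s) + norm l * norm (e s)"
          by (metis norm_mult norm_triangle_ineq)
        also have "\<dots> \<le> V * exp (- b * s) + norm l * (V * exp (- b * s))"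
          using H that by (intro add_mono mult_left_mono) auto
        finally show ?thesis by (simp add: algebra_simps)
      qed
      have ut_b: "norm (ut s) \<le> M1 * exp (- a1 * s) * (norm (ut 0) + (1 + norm l) * V)" if "s \<ge> 0" for s
        using FO[rule_format, of ut "\<lambda>s. pd Q (\<lambda>k. w (Suc k)) s - e' s" "\<lambda>s. v s + l * e s" "(1 + norm l) * V"]
          dut equ vbd that by blast
      have u0: "norm (u 0) \<le> C * S"
      proof -
        have "norm (u 0) \<le> (\<Sum>k\<le>n. norm (coeff Q k * w k 0))"
          unfolding u_def pd_def dQ by (rule norm_sum)
        also have "\<dots> \<le> (\<Sum>k\<le>n. norm (coeff Q k) * S)"
          by (rule sum_mono) (auto simp: norm_mult intro: mult_left_mono wS)
        also have "\<dots> = C * S" unfolding C_def by (simp add: sum_distrib_right)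
        finally show ?thesis .
      qed
      have e0: "norm (e 0) \<le> V" using H by auto
      have ut0: "norm (ut 0) \<le> C * S + S"
        unfolding ut_def using norm_triangle_ineq4[of "u 0" "e 0"] u0 e0 VS by simp
      have u_b: "norm (u s) \<le> (K * S) * exp (- b' * s)" if "s \<ge> 0" for s
      proof -
        have "norm (u s) \<le> norm (ut s) + norm (e s)"
          unfolding ut_def using norm_triangle_ineq[of "u s - e s" "e s"] by simp
        also have "\<dots> \<le> M1 * exp (- a1 * s) * ((C + 2 + norm l) * S) + S * exp (- b * s)"
        proof (intro add_mono)
          have "norm (ut 0) + (1 + norm l) * V \<le> (C + 2 + norm l) * S"
            using ut0 VS mult_left_mono[OF VS, of "1 + norm l"] by (simp add: algebra_simps)
          then show "norm (ut s) \<le> M1 * exp (- a1 * s) * ((C + 2 + norm l) * S)"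
            using ut_b[OF that] M1 by (smt (verit) exp_gt_zero mult_left_mono mult_pos_pos)
          show "norm (e s) \<le> S * exp (- b * s)"
            using H that VS by (smt (verit) exp_gt_zero mult_right_mono)
        qed
        also have "\<dots> \<le> M1 * exp (- b' * s) * ((C + 2 + norm l) * S) + S * exp (- b' * s)"
        proof -
          have e1: "exp (- a1 * s) \<le> exp (- b' * s)" "exp (- b * s) \<le> exp (- b' * s)"
            using that b'_def by (auto intro: mult_right_mono)
          have p: "(C + 2 + norm l) * S \<ge> 0" using C0 S0 by simp
          show ?thesis
            using mult_left_mono[OF mult_right_mono[OF e1(1) p], of M1] M1
              mult_left_mono[OF e1(2) S0]
            by (simp add: algebra_simps)
        qed
        also have "\<dots> = (K * S) * exp (- b' * s)" unfolding K_def by (simp add: algebra_simps)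
        finally show ?thesis .
      qed
      have hypQ: "casc_hyp n Q b' w u (\<lambda>_. 0) (\<lambda>_. 0) (K * S)"
        unfolding casc_hyp_def
      proof (intro conjI allI impI)
        fix k t assume "k < n" "(0::real) \<le> t"
        then show "(w k has_vector_derivative w (Suc k) t) (at t within {0..})" using H by auto
      next
        fix t :: real assume "0 \<le> t"
        show "((\<lambda>_. 0) has_vector_derivative 0) (at t within {0..})" by (rule has_vector_derivative_const)
        show "pd Q w t = u t + 0" unfolding u_def by simp
        show "norm (u t) \<le> K * S * exp (- b' * t)" using u_b \<open>0 \<le> t\<close> by simp
        show "norm (0::complex) \<le> K * S * exp (- b' * t)" using K0 S0 by simp
      qed
      have wlow: "norm (w j s) \<le> (M2 * (1 + K) * S) * exp (- a2 * s)" if "j < n" "s \<ge> 0" for j s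
      proof -
        have "norm (w j s) \<le> M2 * exp (- a2 * s) * ((\<Sum>k<n. norm (w k 0)) + K * S)"
          using IH hypQ that by blast
        also have "\<dots> \<le> M2 * exp (- a2 * s) * (S + K * S)"
        proof (intro mult_left_mono add_mono)
          have "(\<Sum>k<n. norm (w k 0)) \<le> (\<Sum>k<Suc n. norm (w k 0))" by simp
          then show "(\<Sum>k<n. norm (w k 0)) \<le> S" unfolding S_def using V0 by simp
        qed (use M2 K0 in auto)
        finally show ?thesis by (simp add: algebra_simps)
      qed
      have ea: "exp (-a2*t) \<le> exp (-a*t)" "exp (-b'*t) \<le> exp (-a*t)"
        using t a_def by (auto intro: mult_right_mono)
      show "norm (w k t) \<le> M * exp (-a*t) * ((\<Sum>k<Suc n. norm (w k 0)) + V)"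
      proof (cases "k < n")
        case True
        have "norm (w k t) \<le> (M2 * (1 + K) * S) * exp (-a2*t)" using wlow[OF True t] .
        also have "\<dots> \<le> (M2 * (1 + K) * S) * exp (-a*t)"
          using ea M2 K0 S0 by (intro mult_left_mono) auto
        also have "\<dots> \<le> M * exp (-a*t) * S"
        proof -
          have "M2 * (1 + K) \<le> M" unfolding M_def using K0 C0 M2 by (simp add: add_nonneg_nonneg)
          then have "(M2 * (1 + K)) * (exp (-a*t) * S) \<le> M * (exp (-a*t) * S)"
            using S0 by (intro mult_right_mono) auto
          then show ?thesis by (simp add: algebra_simps)
        qed
        finally show ?thesis unfolding S_def .
      next
        case False
        then have kn: "k = n" using k by simp
        have "u t = (\<Sum>j\<le>n. coeff Q j * w j t)" unfolding u_def pd_def dQ ..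
        also have "\<dots> = (\<Sum>j<n. coeff Q j * w j t) + w n t"
          using lQ dQ by (simp add: lessThan_Suc_atMost[symmetric])
        finally have wn: "w n t = u t - (\<Sum>j<n. coeff Q j * w j t)" by simp
        have "norm (w n t) \<le> norm (u t) + norm (\<Sum>j<n. coeff Q j * w j t)"
          unfolding wn by (rule norm_triangle_ineq4)
        also have "\<dots> \<le> (K * S) * exp (-b'*t) + (\<Sum>j<n. norm (coeff Q j) * ((M2 * (1 + K) * S) * exp (-a2*t)))"
        proof (intro add_mono)
          show "norm (u t) \<le> (K * S) * exp (-b'*t)" using u_b[OF t] .
          have "norm (\<Sum>j<n. coeff Q j * w j t) \<le> (\<Sum>j<n. norm (coeff Q j * w j t))" by (rule norm_sum)
          also have "\<dots> \<le> (\<Sum>j<n. norm (coeff Q j) * ((M2 * (1 + K) * S) * exp (-a2*t)))"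
            by (rule sum_mono) (unfold norm_mult, intro mult_left_mono wlow[OF _ t], auto)
          finally show "norm (\<Sum>j<n. coeff Q j * w j t) \<le> (\<Sum>j<n. norm (coeff Q j) * ((M2 * (1 + K) * S) * exp (-a2*t)))" .
        qed
        also have "\<dots> = (K * S) * exp (-b'*t) + (\<Sum>j<n. norm (coeff Q j)) * ((M2 * (1 + K) * S) * exp (-a2*t))"
          by (simp add: sum_distrib_right)
        also have "\<dots> \<le> (K * S) * exp (-a*t) + C * ((M2 * (1 + K) * S) * exp (-a*t))"
        proof (intro add_mono)
          show "(K * S) * exp (-b'*t) \<le> (K * S) * exp (-a*t)"
            using ea K0 S0 by (intro mult_left_mono) auto
          have s1: "(\<Sum>j<n. norm (coeff Q j)) \<le> C" unfolding C_def
            by (rule sum_mono2) auto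
          have s2: "(M2 * (1 + K) * S) * exp (-a2*t) \<le> (M2 * (1 + K) * S) * exp (-a*t)"
            by (rule mult_left_mono[OF ea(1)]) (use M2 K0 S0 in simp)
          show "(\<Sum>j<n. norm (coeff Q j)) * ((M2 * (1 + K) * S) * exp (-a2*t)) \<le> C * ((M2 * (1 + K) * S) * exp (-a*t))"
            by (rule mult_mono[OF s1 s2 C0]) (use M2 K0 S0 in simp)
        qed
        also have "\<dots> \<le> M * exp (-a*t) * S"
        proof -
          have "(K * S) * exp (-a*t) + C * ((M2 * (1 + K) * S) * exp (-a*t)) = (K + C * M2 * (1 + K)) * (exp (-a*t) * S)"
            by (simp add: algebra_simps)
          also have "\<dots> \<le> M * (exp (-a*t) * S)"
            unfolding M_def using K0 M2 S0 by (intro mult_right_mono) auto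
          finally show ?thesis by (simp add: algebra_simps)
        qed
        finally show ?thesis unfolding S_def kn .
      qed
    qed
    then show "\<exists>M a. M > 0 \<and> a > 0 \<and> (\<forall>w v e e' V. casc_hyp (Suc n) P b w v e e' V
       \<longrightarrow> (\<forall>t\<ge>0. \<forall>k<Suc n. norm (w k t) \<le> M * exp (-a*t) * ((\<Sum>k<Suc n. norm (w k 0)) + V)))"
      using M0 a0 by blast
  qed
qed


lemma upd_axis:
  assumes "pl j = i"
  shows "upd pl i x (x + s *\<^sub>R axis j 1) = x + s *\<^sub>R axis j 1"
  unfolding upd_def using assms by (auto simp: vec_eq_iff axis_def)

lemma F_zero:
  fixes f :: "nat \<Rightarrow> real^'n \<Rightarrow> real" and pl :: "'n \<Rightarrow> nat"
  assumes players: "\<forall>j. pl j \<in> {1..N}"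
    and C1: "\<forall>i\<in>{1..N}. \<forall>x. \<exists>G. continuous_on UNIV G \<and>
               (\<forall>y. ((\<lambda>z. f i (upd pl i x z)) has_derivative (\<lambda>h. G y \<bullet> h)) (at y))"
    and NE: "nash_eq N f pl xstar"
  shows "pseudograd f pl xstar = 0"
proof -
  have "pseudograd f pl xstar $ j = 0" for j
  proof -
    define i where "i = pl j"
    have i: "i \<in> {1..N}" using players i_def by simp
    obtain G where G: "\<forall>y. ((\<lambda>z. f i (upd pl i xstar z)) has_derivative (\<lambda>h. G y \<bullet> h)) (at y)"
      using C1 i by blast
    define z where "z s = xstar + s *\<^sub>R axis j (1::real)" for s :: real
    have dz: "(z has_derivative (\<lambda>h. h *\<^sub>R axis j 1)) (at 0)"
      unfolding z_def by (auto intro!: derivative_eq_intros)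
    have "((\<lambda>s. f i (upd pl i xstar (z s))) has_derivative (\<lambda>h. G (z 0) \<bullet> (h *\<^sub>R axis j 1))) (at 0)"
      using diff_chain_at[OF dz G[rule_format, of "z 0"]] by (simp add: o_def)
    moreover have "upd pl i xstar (z s) = z s" for s
      unfolding z_def by (rule upd_axis) (simp add: i_def)
    ultimately have "((\<lambda>s. f i (z s)) has_derivative (\<lambda>h. (G (z 0) \<bullet> axis j 1) * h)) (at 0)"
      by (simp add: inner_scaleR_right mult.commute)
    then have D: "((\<lambda>s. f i (z s)) has_real_derivative (G (z 0) \<bullet> axis j 1)) (at 0)"
      unfolding has_field_derivative_def by simp
    have "\<forall>y. \<bar>0 - y\<bar> < 1 \<longrightarrow> f i (z 0) \<le> f i (z y)"
    proof (intro allI impI)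
      fix y :: real
      have "f i xstar \<le> f i (upd pl i xstar (z y))" using NE i unfolding nash_eq_def by blast
      then show "f i (z 0) \<le> f i (z y)" using \<open>\<And>s. upd pl i xstar (z s) = z s\<close>
        unfolding z_def by simp
    qed
    then have l0: "G (z 0) \<bullet> axis j 1 = 0" using DERIV_local_min[OF D, of 1] by simp
    have "deriv (\<lambda>s. f i (z s)) 0 = 0" using DERIV_imp_deriv[OF D] l0 by simp
    then show ?thesis unfolding pseudograd_def z_def i_def by simp
  qed
  then show ?thesis by (simp add: vec_eq_iff)
qed

lemma gam_const:
  assumes "\<forall>j. r (pl j) \<ge> 1" "\<forall>j. r (pl j) \<ge> 2 \<longrightarrow> c (pl j) 0 = 1"
  shows "gam pl r c (\<lambda>k. if k = 0 then xstar else 0) = xstar"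
proof -
  have "gam pl r c (\<lambda>k. if k = 0 then xstar else 0) $ j = xstar $ j" for j
  proof (cases "r (pl j) \<ge> 2")
    case True
    have "(\<Sum>k<r (pl j) - 1. c (pl j) k * (if k = 0 then xstar else 0) $ j)
        = (\<Sum>k<r (pl j) - 1. if k = 0 then c (pl j) 0 * xstar $ j else 0)"
      by (rule sum.cong) auto
    also have "\<dots> = c (pl j) 0 * xstar $ j" using True by (simp add: sum.delta)
    finally show ?thesis unfolding gam_def using True assms(2) by simp
  next
    case False
    then have "r (pl j) = 1" using assms(1) by (metis le_antisym not_less_eq_eq numeral_2_eq_2 one_add_one plus_1_eq_Suc)
    then show ?thesis unfolding gam_def by simp
  qed
  then show ?thesis by (simp add: vec_eq_iff)
qed

lemma gam_deriv:
  assumes sol: "cl_solution f pl r c m g \<theta> X" and rp: "\<forall>j. r (pl j) \<ge> 1" and t: "t \<ge> 0"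
  shows "((\<lambda>\<tau>. gam pl r c (\<lambda>k. X k \<tau>) $ j) has_real_derivative
           (- pseudograd f pl (gam pl r c (\<lambda>k. X k t)) $ j)) (at t within {0..})"
proof -
  define R where "R = r (pl j)"
  have R1: "R \<ge> 1" using rp R_def by simp
  have D: "\<forall>k<R. ((\<lambda>\<tau>. X k \<tau> $ j) has_real_derivative X (Suc k) t $ j) (at t within {0..})"
    using sol t unfolding cl_solution_def R_def by blast
  have E: "(\<chi> j. X (r (pl j)) t $ j) + gtheta pl m g \<theta> (\<lambda>k. X k t) t
        = - pseudograd f pl (gam pl r c (\<lambda>k. X k t)) + gtheta pl m g \<theta> (\<lambda>k. X k t) t
          - Ks pl r c (\<lambda>k. X k t)"
    using sol t unfolding cl_solution_def by blast
  have E': "X R t $ j = - pseudograd f pl (gam pl r c (\<lambda>k. X k t)) $ j - Ks pl r c (\<lambda>k. X k t) $ j"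
    using arg_cong[OF E, of "\<lambda>v. v $ j"] unfolding R_def by simp
  have "((\<lambda>\<tau>. (\<Sum>k<R-1. c (pl j) k * X k \<tau> $ j) + X (R-1) \<tau> $ j) has_real_derivative
      ((\<Sum>k<R-1. c (pl j) k * X (Suc k) t $ j) + X R t $ j)) (at t within {0..})"
  proof (intro DERIV_add DERIV_sum DERIV_cmult)
    show "((\<lambda>\<tau>. X (R-1) \<tau> $ j) has_real_derivative X R t $ j) (at t within {0..})"
      using D[rule_format, of "R-1"] R1 by simp
  qed (use D in auto)
  moreover have "Ks pl r c (\<lambda>k. X k t) $ j = (\<Sum>k<R-1. c (pl j) k * X (Suc k) t $ j)"
    unfolding Ks_def R_def by simp
  ultimately show ?thesis using E' unfolding gam_def R_def by simp
qed

lemma norm_sq_vec: "(norm (x :: real^'n))\<^sup>2 = (\<Sum>j\<in>UNIV. (x $ j)\<^sup>2)"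
  unfolding power2_norm_eq_inner inner_vec_def by (simp add: power2_eq_square)

lemma gam_decay:
  assumes sol: "cl_solution f pl r c m g \<theta> X" and rp: "\<forall>j. r (pl j) \<ge> 1"
    and mu: "\<mu> > 0" and mono: "\<forall>x x'. (x - x') \<bullet> (pseudograd f pl x - pseudograd f pl x') \<ge> \<mu> * (norm (x - x'))\<^sup>2"
    and F0: "pseudograd f pl xstar = 0"
    and t: "t \<ge> 0"
  shows "norm (gam pl r c (\<lambda>k. X k t) - xstar) \<le> exp (- \<mu> * t) * norm (gam pl r c (\<lambda>k. X k 0) - xstar)"
proof -
  define \<gamma> where "\<gamma> \<tau> = gam pl r c (\<lambda>k. X k \<tau>)" for \<tau>
  define F where "F = pseudograd f pl"
  define h where "h \<tau> = exp (2 * \<mu> * \<tau>) * (\<Sum>j\<in>UNIV. (\<gamma> \<tau> $ j - xstar $ j)\<^sup>2)" for \<tau>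
  define h' where "h' \<tau> = 2 * \<mu> * exp (2 * \<mu> * \<tau>) * (\<Sum>j\<in>UNIV. (\<gamma> \<tau> $ j - xstar $ j)\<^sup>2)
      + exp (2 * \<mu> * \<tau>) * (\<Sum>j\<in>UNIV. 2 * (\<gamma> \<tau> $ j - xstar $ j) * (- F (\<gamma> \<tau>) $ j))" for \<tau>
  have dg: "((\<lambda>\<tau>. \<gamma> \<tau> $ j) has_real_derivative (- F (\<gamma> s) $ j)) (at s within {0..})" if "s \<ge> 0" for s j
    unfolding \<gamma>_def F_def by (rule gam_deriv[OF sol rp that])
  have dh: "\<forall>s\<ge>0. (h has_real_derivative h' s) (at s within {0..})"
  proof (intro allI impI)
    fix s :: real assume s: "s \<ge> 0"
    have "((\<lambda>\<tau>. (\<Sum>j\<in>UNIV. (\<gamma> \<tau> $ j - xstar $ j)\<^sup>2)) has_real_derivative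
        (\<Sum>j\<in>UNIV. 2 * (\<gamma> s $ j - xstar $ j) * (- F (\<gamma> s) $ j))) (at s within {0..})"
    proof (rule DERIV_sum)
      fix j :: 'a
      have "((\<lambda>\<tau>. \<gamma> \<tau> $ j - xstar $ j) has_real_derivative (- F (\<gamma> s) $ j)) (at s within {0..})"
        using DERIV_diff[OF dg[OF s] DERIV_const[of "xstar $ j"]] by simp
      from DERIV_power[OF this, of 2]
      show "((\<lambda>\<tau>. (\<gamma> \<tau> $ j - xstar $ j)\<^sup>2) has_real_derivative 2 * (\<gamma> s $ j - xstar $ j) * (- F (\<gamma> s) $ j)) (at s within {0..})"
        by (simp add: algebra_simps)
    qed
    moreover have "((\<lambda>\<tau>. exp (2 * \<mu> * \<tau>)) has_real_derivative (exp (2 * \<mu> * s) * (2 * \<mu>))) (at s within {0..})"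
      by (auto intro!: derivative_eq_intros)
    ultimately show "(h has_real_derivative h' s) (at s within {0..})"
      unfolding h_def h'_def using DERIV_mult by (fastforce simp: algebra_simps)
  qed
  have h'neg: "\<forall>s\<ge>0. h' s \<le> 0"
  proof (intro allI impI)
    fix s :: real assume s: "s \<ge> 0"
    have ip: "(\<gamma> s - xstar) \<bullet> (F (\<gamma> s) - F xstar) = (\<Sum>j\<in>UNIV. (\<gamma> s $ j - xstar $ j) * F (\<gamma> s) $ j)"
      using F0 unfolding F_def inner_vec_def by simp
    have ns: "(norm (\<gamma> s - xstar))\<^sup>2 = (\<Sum>j\<in>UNIV. (\<gamma> s $ j - xstar $ j)\<^sup>2)"
      by (simp add: norm_sq_vec)
    have "\<mu> * (\<Sum>j\<in>UNIV. (\<gamma> s $ j - xstar $ j)\<^sup>2) \<le> (\<Sum>j\<in>UNIV. (\<gamma> s $ j - xstar $ j) * F (\<gamma> s) $ j)"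
      using mono[rule_format, of "\<gamma> s" xstar] ip ns unfolding F_def by simp
    moreover have "(\<Sum>j\<in>UNIV. 2 * (\<gamma> s $ j - xstar $ j) * (- F (\<gamma> s) $ j))
        = - 2 * (\<Sum>j\<in>UNIV. (\<gamma> s $ j - xstar $ j) * F (\<gamma> s) $ j)"
      by (simp add: sum_distrib_left sum_negf algebra_simps)
    ultimately have "2 * \<mu> * (\<Sum>j\<in>UNIV. (\<gamma> s $ j - xstar $ j)\<^sup>2) + (\<Sum>j\<in>UNIV. 2 * (\<gamma> s $ j - xstar $ j) * (- F (\<gamma> s) $ j)) \<le> 0"
      by linarith
    then have "exp (2 * \<mu> * s) * (2 * \<mu> * (\<Sum>j\<in>UNIV. (\<gamma> s $ j - xstar $ j)\<^sup>2) + (\<Sum>j\<in>UNIV. 2 * (\<gamma> s $ j - xstar $ j) * (- F (\<gamma> s) $ j))) \<le> 0"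
      by (simp add: mult_nonneg_nonpos)
    then show "h' s \<le> 0" unfolding h'_def by (simp add: algebra_simps)
  qed
  have "h t \<le> h 0" by (rule nonincr_from_deriv[OF dh h'neg t])
  then have "exp (2 * \<mu> * t) * (norm (\<gamma> t - xstar))\<^sup>2 \<le> (norm (\<gamma> 0 - xstar))\<^sup>2"
    unfolding h_def by (simp add: norm_sq_vec)
  then have "(norm (\<gamma> t - xstar))\<^sup>2 \<le> (exp (- \<mu> * t) * norm (\<gamma> 0 - xstar))\<^sup>2"
  proof -
    assume a: "exp (2 * \<mu> * t) * (norm (\<gamma> t - xstar))\<^sup>2 \<le> (norm (\<gamma> 0 - xstar))\<^sup>2"
    have "exp (2 * \<mu> * t) = (exp (\<mu> * t))\<^sup>2" by (simp add: power2_eq_square exp_add[symmetric])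
    moreover have "exp (- \<mu> * t) * exp (\<mu> * t) = 1" by (simp add: exp_add[symmetric])
    ultimately have b: "(exp (\<mu> * t))\<^sup>2 * (norm (\<gamma> t - xstar))\<^sup>2 \<le> (norm (\<gamma> 0 - xstar))\<^sup>2"
      and c: "exp (- \<mu> * t) * exp (\<mu> * t) = 1" using a by simp_all
    have "(exp (- \<mu> * t))\<^sup>2 * ((exp (\<mu> * t))\<^sup>2 * (norm (\<gamma> t - xstar))\<^sup>2) \<le> (exp (- \<mu> * t))\<^sup>2 * (norm (\<gamma> 0 - xstar))\<^sup>2"
      using b by (rule mult_left_mono) simp
    moreover have d: "(exp (- \<mu> * t))\<^sup>2 * ((exp (\<mu> * t))\<^sup>2 * (norm (\<gamma> t - xstar))\<^sup>2) = (exp (- \<mu> * t) * exp (\<mu> * t))\<^sup>2 * (norm (\<gamma> t - xstar))\<^sup>2"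
      by (simp add: power_mult_distrib)
    ultimately have "(exp (- \<mu> * t) * exp (\<mu> * t))\<^sup>2 * (norm (\<gamma> t - xstar))\<^sup>2 \<le> (exp (- \<mu> * t))\<^sup>2 * (norm (\<gamma> 0 - xstar))\<^sup>2"
      by linarith
    then show ?thesis unfolding c by (simp add: power_mult_distrib)
  qed
  then show ?thesis unfolding \<gamma>_def
    by (rule power2_le_imp_le) simp
qed

lemma cl_comp:
  assumes sol: "cl_solution f pl r c m g \<theta> X" and t: "t \<ge> 0"
  shows "X (r (pl j)) t $ j = - pseudograd f pl (gam pl r c (\<lambda>k. X k t)) $ j
           - (\<Sum>k<r (pl j) - 1. c (pl j) k * X (Suc k) t $ j)"
proof -
  have E: "(\<chi> j. X (r (pl j)) t $ j) + gtheta pl m g \<theta> (\<lambda>k. X k t) t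
        = - pseudograd f pl (gam pl r c (\<lambda>k. X k t)) + gtheta pl m g \<theta> (\<lambda>k. X k t) t
          - Ks pl r c (\<lambda>k. X k t)"
    using sol t unfolding cl_solution_def by blast
  show ?thesis using arg_cong[OF E, of "\<lambda>v. v $ j"] unfolding Ks_def by simp
qed

definition cpoly :: "nat \<Rightarrow> (nat \<Rightarrow> real) \<Rightarrow> complex poly" where
  "cpoly p a = monom 1 p + (\<Sum>k<p. monom (complex_of_real (a k)) k)"

lemma coeff_cpoly: "coeff (cpoly p a) k = (if k = p then 1 else if k < p then complex_of_real (a k) else 0)"
proof -
  have "(\<Sum>j<p. coeff (monom (complex_of_real (a j)) j) k) = (if k < p then complex_of_real (a k) else 0)"
    by (simp add: coeff_monom sum.delta)
  then show ?thesis unfolding cpoly_def by (simp add: coeff_sum coeff_monom)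
qed

lemma degree_cpoly: "degree (cpoly p a) = p"
proof (rule antisym)
  show "degree (cpoly p a) \<le> p" by (rule degree_le) (simp add: coeff_cpoly)
  show "p \<le> degree (cpoly p a)" by (rule le_degree) (simp add: coeff_cpoly)
qed

lemma lead_cpoly: "lead_coeff (cpoly p a) = 1"
  by (simp add: degree_cpoly coeff_cpoly)

lemma poly_cpoly: "poly (cpoly p a) z = z ^ p + (\<Sum>k<p. complex_of_real (a k) * z ^ k)"
  unfolding cpoly_def by (simp add: poly_sum poly_monom)

lemma pd_cpoly: "pd (cpoly p a) w t = w p t + (\<Sum>k<p. complex_of_real (a k) * w k t)"
proof -
  have "pd (cpoly p a) w t = (\<Sum>k<Suc p. coeff (cpoly p a) k * w k t)"
    unfolding pd_def degree_cpoly lessThan_Suc_atMost ..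
  also have "\<dots> = (\<Sum>k<p. coeff (cpoly p a) k * w k t) + w p t"
    by (simp add: coeff_cpoly)
  also have "(\<Sum>k<p. coeff (cpoly p a) k * w k t) = (\<Sum>k<p. complex_of_real (a k) * w k t)"
    by (rule sum.cong) (auto simp: coeff_cpoly)
  finally show ?thesis by simp
qed

lemma coord_bound:
  assumes sol: "cl_solution f pl r c m g \<theta> X" and rp: "\<forall>j. r (pl j) \<ge> 1"
    and mu: "\<mu> > 0" and mono: "\<forall>x x'. (x - x') \<bullet> (pseudograd f pl x - pseudograd f pl x') \<ge> \<mu> * (norm (x - x'))\<^sup>2"
    and F0: "pseudograd f pl xstar = 0"
    and CH: "\<forall>w v e e' V. casc_hyp (r (pl j) - 1) (cpoly (r (pl j) - 1) (c (pl j))) \<mu> w v e e' V \<longrightarrow>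
       (\<forall>t\<ge>0. \<forall>k<r (pl j) - 1. norm (w k t) \<le> Mj * exp (-aj*t) * ((\<Sum>k<r (pl j) - 1. norm (w k 0)) + V))"
    and t: "t \<ge> 0" and k: "k \<in> {1..<r (pl j)}"
  shows "\<bar>X k t $ j\<bar> \<le> Mj * exp (-aj*t) * ((\<Sum>k'<r (pl j) - 1. \<bar>X (Suc k') 0 $ j\<bar>) + norm (gam pl r c (\<lambda>k. X k 0) - xstar))"
proof -
  define p where "p = r (pl j) - 1"
  define \<gamma> where "\<gamma> \<tau> = gam pl r c (\<lambda>k. X k \<tau>)" for \<tau>
  define w where "w k \<tau> = complex_of_real (X (Suc k) \<tau> $ j)" for k \<tau>
  define e where "e \<tau> = complex_of_real (\<gamma> \<tau> $ j - xstar $ j)" for \<tau>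
  define e' where "e' \<tau> = complex_of_real (- pseudograd f pl (\<gamma> \<tau>) $ j)" for \<tau>
  define V where "V = norm (\<gamma> 0 - xstar)"
  have "r (pl j) \<ge> 1" using rp by blast
  then have Sp: "Suc p = r (pl j)" unfolding p_def by simp
  have H: "casc_hyp p (cpoly p (c (pl j))) \<mu> w (\<lambda>_. 0) e e' V"
    unfolding casc_hyp_def
  proof (intro conjI allI impI)
    fix k and s :: real assume kp: "k < p" and s: "0 \<le> s"
    have "Suc k < r (pl j)" using kp Sp by simp
    then have "((\<lambda>\<tau>. X (Suc k) \<tau> $ j) has_real_derivative X (Suc (Suc k)) s $ j) (at s within {0..})"
      using sol s unfolding cl_solution_def by blast
    then show "(w k has_vector_derivative w (Suc k) s) (at s within {0..})"
      unfolding w_def by (rule has_vector_derivative_of_real)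
  next
    fix s :: real assume s: "0 \<le> s"
    have "((\<lambda>\<tau>. \<gamma> \<tau> $ j - xstar $ j) has_real_derivative (- pseudograd f pl (\<gamma> s) $ j)) (at s within {0..})"
      using DERIV_diff[OF gam_deriv[OF sol rp s, of j] DERIV_const[of "xstar $ j"]] unfolding \<gamma>_def by simp
    then show "(e has_vector_derivative e' s) (at s within {0..})"
      unfolding e_def e'_def by (rule has_vector_derivative_of_real)
    have "pd (cpoly p (c (pl j))) w s = w p s + (\<Sum>k<p. complex_of_real (c (pl j) k) * w k s)"
      by (rule pd_cpoly)
    also have "\<dots> = complex_of_real (X (r (pl j)) s $ j + (\<Sum>k<p. c (pl j) k * X (Suc k) s $ j))"
      unfolding w_def Sp by simp
    also have "\<dots> = e' s"
      using cl_comp[OF sol s, of j] unfolding e'_def \<gamma>_def p_def by simp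
    finally show "pd (cpoly p (c (pl j))) w s = 0 + e' s" by simp
    have dec: "norm (\<gamma> s - xstar) \<le> exp (- \<mu> * s) * V"
      unfolding \<gamma>_def V_def by (rule gam_decay[OF sol rp mu mono F0 s])
    have V0: "V \<ge> 0" unfolding V_def by simp
    show "norm (0::complex) \<le> V * exp (- \<mu> * s)" using V0 by simp
    have "norm (e s) = \<bar>(\<gamma> s - xstar) $ j\<bar>" unfolding e_def norm_of_real by simp
    also have "\<dots> \<le> norm (\<gamma> s - xstar)" by (rule component_le_norm_cart)
    finally show "norm (e s) \<le> V * exp (- \<mu> * s)" using dec by (simp add: mult.commute)
  qed
  obtain k' where k': "k = Suc k'" "k' < p" using k Sp by (cases k) auto
  have "norm (w k' t) \<le> Mj * exp (-aj*t) * ((\<Sum>k<p. norm (w k 0)) + V)"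
    using CH H t k'(2) unfolding p_def by blast
  then show ?thesis unfolding w_def V_def \<gamma>_def k'(1) p_def by simp
qed

lemma xs_sq_nonneg: "xs_sq pl r xi \<ge> 0"
  unfolding xs_sq_def by (intro sum_nonneg) auto

lemma coord_err_nonneg: "coord_err pl r c xstar xi \<ge> 0"
  unfolding coord_err_def using xs_sq_nonneg[of pl r xi] by simp

lemma coord_err_ge:
  shows "norm (gam pl r c xi - xstar) \<le> coord_err pl r c xstar xi"
    and "k \<in> {1..<r (pl j)} \<Longrightarrow> \<bar>xi k $ j\<bar> \<le> coord_err pl r c xstar xi"
proof -
  have xs0: "xs_sq pl r xi \<ge> 0" unfolding xs_sq_def by (intro sum_nonneg) auto
  have "sqrt ((norm (gam pl r c xi - xstar))\<^sup>2) \<le> coord_err pl r c xstar xi"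
    unfolding coord_err_def using xs0 by (intro real_sqrt_le_mono) simp
  then show "norm (gam pl r c xi - xstar) \<le> coord_err pl r c xstar xi" by simp
  assume k: "k \<in> {1..<r (pl j)}"
  have "(xi k $ j)\<^sup>2 \<le> (\<Sum>k\<in>{1..<r (pl j)}. (xi k $ j)\<^sup>2)"
    by (rule member_le_sum) (use k in auto)
  also have "\<dots> \<le> xs_sq pl r xi" unfolding xs_sq_def
    by (rule member_le_sum[of j UNIV "\<lambda>j. \<Sum>k\<in>{1..<r (pl j)}. (xi k $ j)\<^sup>2"]) (auto intro: sum_nonneg)
  finally have "sqrt ((xi k $ j)\<^sup>2) \<le> coord_err pl r c xstar xi"
    unfolding coord_err_def by (intro real_sqrt_le_mono) (simp add: add_increasing)
  then show "\<bar>xi k $ j\<bar> \<le> coord_err pl r c xstar xi" by simp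
qed

lemma stability:
  fixes pl :: "'n::finite \<Rightarrow> nat"
  assumes rp: "\<forall>j. r (pl j) \<ge> 1" and hw: "\<forall>j. hurwitz_monic (r (pl j) - 1) (c (pl j))"
    and mu: "\<mu> > 0" and mono: "\<forall>x x'. (x - x') \<bullet> (pseudograd f pl x - pseudograd f pl x') \<ge> \<mu> * (norm (x - x'))\<^sup>2"
    and F0: "pseudograd f pl xstar = 0"
  shows "\<exists>M a. M > 0 \<and> a > 0 \<and> (\<forall>X. cl_solution f pl r c m g \<theta> X \<longrightarrow>
          (\<forall>t\<ge>0. coord_err pl r c xstar (\<lambda>k. X k t)
                   \<le> M * exp (- a * t) * coord_err pl r c xstar (\<lambda>k. X k 0)))"
proof -
  define Q where "Q j M a \<longleftrightarrow> M > 0 \<and> a > 0 \<and> (\<forall>w v e e' V. casc_hyp (r (pl j) - 1) (cpoly (r (pl j) - 1) (c (pl j))) \<mu> w v e e' V \<longrightarrow>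
       (\<forall>t\<ge>0. \<forall>k<r (pl j) - 1. norm (w k t) \<le> M * exp (-a*t) * ((\<Sum>k<r (pl j) - 1. norm (w k 0)) + V)))" for j M a
  have ex: "\<forall>j. \<exists>M a. Q j M a"
  proof
    fix j
    have hz: "\<forall>z. poly (cpoly (r (pl j) - 1) (c (pl j))) z = 0 \<longrightarrow> Re z < 0"
      using hw unfolding hurwitz_monic_def poly_cpoly by blast
    show "\<exists>M a. Q j M a" unfolding Q_def
      using cascade[rule_format, OF degree_cpoly lead_cpoly _ mu] hz by blast
  qed
  then have "\<exists>Mf. \<forall>j. \<exists>a. Q j (Mf j) a" by (rule choice)
  then obtain Mf where "\<forall>j. \<exists>a. Q j (Mf j) a" by blast
  then have "\<exists>af. \<forall>j. Q j (Mf j) (af j)" by (rule choice)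
  then obtain af where QA: "\<forall>j. Q j (Mf j) (af j)" by blast
  define a where "a = Min (insert \<mu> (range af))"
  have fin: "finite (insert \<mu> (range af))" by simp
  have a0: "a > 0" unfolding a_def using fin mu QA unfolding Q_def by (auto simp: Min_gr_iff)
  have a_af: "a \<le> af j" for j unfolding a_def using fin by (intro Min_le) auto
  have a_mu: "a \<le> \<mu>" unfolding a_def using fin by (intro Min_le) auto
  define Mt where "Mt = (\<Sum>j\<in>UNIV. Mf j)"
  have Mf0: "Mf j > 0" for j using QA unfolding Q_def by blast
  have Mt_ge: "Mf j \<le> Mt" for j unfolding Mt_def
    by (rule member_le_sum) (use Mf0 less_imp_le in auto)
  have Mt0: "Mt \<ge> 0" using Mt_ge[of undefined] Mf0[of undefined] by linarith
  define RS where "RS = (\<Sum>j\<in>UNIV. real (r (pl j)))"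
  have RS_ge: "real (r (pl j)) \<le> RS" for j unfolding RS_def by (rule member_le_sum) auto
  have RS0: "RS \<ge> 0" unfolding RS_def by (simp add: sum_nonneg)
  define M where "M = sqrt (1 + RS * (Mt * RS)\<^sup>2)"
  have M0: "M > 0" unfolding M_def using RS0 by (simp add: add_pos_nonneg)
  have MM: "M\<^sup>2 = 1 + RS * (Mt * RS)\<^sup>2" unfolding M_def using RS0 by simp
  have main: "\<forall>X. cl_solution f pl r c m g \<theta> X \<longrightarrow>
          (\<forall>t\<ge>0. coord_err pl r c xstar (\<lambda>k. X k t)
                   \<le> M * exp (- a * t) * coord_err pl r c xstar (\<lambda>k. X k 0))"
  proof (intro allI impI)
    fix X t assume sol: "cl_solution f pl r c m g \<theta> X" and t: "(0::real) \<le> t"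
    define E0 where "E0 = coord_err pl r c xstar (\<lambda>k. X k 0)"
    define A where "A = exp (- a * t) * E0"
    have E00: "E0 \<ge> 0" unfolding E0_def by (rule coord_err_nonneg)
    have A0: "A \<ge> 0" unfolding A_def using E00 by simp
    have ea: "exp (- af j * t) \<le> exp (- a * t)" for j using a_af[of j] t by (simp add: mult_right_mono)
    have emu: "exp (- \<mu> * t) \<le> exp (- a * t)" using a_mu t by (simp add: mult_right_mono)
    have g0: "norm (gam pl r c (\<lambda>k. X k 0) - xstar) \<le> E0" unfolding E0_def by (rule coord_err_ge(1))
    have gt: "norm (gam pl r c (\<lambda>k. X k t) - xstar) \<le> A"
    proof -
      have "norm (gam pl r c (\<lambda>k. X k t) - xstar) \<le> exp (- \<mu> * t) * norm (gam pl r c (\<lambda>k. X k 0) - xstar)"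
        by (rule gam_decay[OF sol rp mu mono F0 t])
      also have "\<dots> \<le> exp (- a * t) * E0" using emu g0 by (intro mult_mono) auto
      finally show ?thesis unfolding A_def .
    qed
    have xb: "\<bar>X k t $ j\<bar> \<le> Mt * RS * A" if k: "k \<in> {1..<r (pl j)}" for j k
    proof -
      define p where "p = r (pl j) - 1"
      have "r (pl j) \<ge> 1" using rp by blast
      then have rp1: "real (r (pl j)) = real p + 1" unfolding p_def by simp
      have CH: "\<forall>w v e e' V. casc_hyp (r (pl j) - 1) (cpoly (r (pl j) - 1) (c (pl j))) \<mu> w v e e' V \<longrightarrow>
       (\<forall>t\<ge>0. \<forall>k<r (pl j) - 1. norm (w k t) \<le> Mf j * exp (-af j*t) * ((\<Sum>k<r (pl j) - 1. norm (w k 0)) + V))"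
        using QA unfolding Q_def by blast
      have b1: "\<bar>X k t $ j\<bar> \<le> Mf j * exp (-af j*t) * ((\<Sum>k'<p. \<bar>X (Suc k') 0 $ j\<bar>) + norm (gam pl r c (\<lambda>k. X k 0) - xstar))"
        unfolding p_def by (rule coord_bound[OF sol rp mu mono F0 CH t k])
      have "(\<Sum>k'<p. \<bar>X (Suc k') 0 $ j\<bar>) \<le> (\<Sum>k'<p. E0)"
      proof (rule sum_mono)
        fix k' assume "k' \<in> {..<p}"
        then have "Suc k' \<in> {1..<r (pl j)}" unfolding p_def by auto
        then show "\<bar>X (Suc k') 0 $ j\<bar> \<le> E0" unfolding E0_def by (rule coord_err_ge(2))
      qed
      then have "(\<Sum>k'<p. \<bar>X (Suc k') 0 $ j\<bar>) + norm (gam pl r c (\<lambda>k. X k 0) - xstar) \<le> real p * E0 + E0"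
        using g0 by simp
      also have "\<dots> = real (r (pl j)) * E0" using rp1 by (simp add: algebra_simps)
      also have "\<dots> \<le> RS * E0" using RS_ge E00 by (intro mult_right_mono) auto
      finally have b2: "(\<Sum>k'<p. \<bar>X (Suc k') 0 $ j\<bar>) + norm (gam pl r c (\<lambda>k. X k 0) - xstar) \<le> RS * E0" .
      have b3: "Mf j * exp (-af j*t) \<le> Mt * exp (- a * t)"
        using Mt_ge[of j] ea[of j] Mf0[of j] Mt0 by (intro mult_mono) auto
      have "Mf j * exp (-af j*t) * ((\<Sum>k'<p. \<bar>X (Suc k') 0 $ j\<bar>) + norm (gam pl r c (\<lambda>k. X k 0) - xstar))
          \<le> (Mt * exp (- a * t)) * (RS * E0)"
        by (rule mult_mono[OF b3 b2]) (use Mt0 in \<open>auto intro: sum_nonneg\<close>)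
      also have "\<dots> = Mt * RS * A" unfolding A_def by (simp add: algebra_simps)
      finally show ?thesis using b1 by linarith
    qed
    define B where "B = Mt * RS * A"
    have B0: "B \<ge> 0" unfolding B_def using Mt0 RS0 A0 by simp
    have "xs_sq pl r (\<lambda>k. X k t) \<le> (\<Sum>j\<in>UNIV. \<Sum>k\<in>{1..<r (pl j)}. B\<^sup>2)"
      unfolding xs_sq_def
    proof (intro sum_mono)
      fix j k assume "k \<in> {1..<r (pl j)}"
      then have "\<bar>X k t $ j\<bar> \<le> B" unfolding B_def by (rule xb)
      then have "\<bar>X k t $ j\<bar>\<^sup>2 \<le> B\<^sup>2" by (rule power_mono) simp
      then show "(X k t $ j)\<^sup>2 \<le> B\<^sup>2" by simp
    qed
    also have "\<dots> = (\<Sum>j\<in>UNIV. real (r (pl j) - 1) * B\<^sup>2)" by simp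
    also have "\<dots> \<le> (\<Sum>j\<in>UNIV. real (r (pl j)) * B\<^sup>2)"
      by (intro sum_mono mult_right_mono) auto
    also have "\<dots> = RS * B\<^sup>2" unfolding RS_def by (simp add: sum_distrib_right)
    finally have xs: "xs_sq pl r (\<lambda>k. X k t) \<le> RS * B\<^sup>2" .
    have gt2: "(norm (gam pl r c (\<lambda>k. X k t) - xstar))\<^sup>2 \<le> A\<^sup>2"
      using gt by (intro power_mono) auto
    have "(norm (gam pl r c (\<lambda>k. X k t) - xstar))\<^sup>2 + xs_sq pl r (\<lambda>k. X k t) \<le> A\<^sup>2 + RS * B\<^sup>2"
      using gt2 xs by linarith
    also have "\<dots> = (M * A)\<^sup>2" unfolding B_def power_mult_distrib MM by (simp add: algebra_simps)
    finally have "coord_err pl r c xstar (\<lambda>k. X k t) \<le> sqrt ((M * A)\<^sup>2)"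
      unfolding coord_err_def by (rule real_sqrt_le_mono)
    also have "\<dots> = M * A" using M0 A0 by simp
    finally show "coord_err pl r c xstar (\<lambda>k. X k t) \<le> M * exp (- a * t) * coord_err pl r c xstar (\<lambda>k. X k 0)"
      unfolding A_def E0_def by (simp add: algebra_simps)
  qed
  show ?thesis using M0 a0 main by blast
qed

theorem theorem1:
  fixes N :: nat
    and pl :: "'n::finite \<Rightarrow> nat"
    and f :: "nat \<Rightarrow> real^'n \<Rightarrow> real"
    and r m :: "nat \<Rightarrow> nat"
    and c :: "nat \<Rightarrow> nat \<Rightarrow> real"
    and g :: "nat \<Rightarrow> (nat \<Rightarrow> real^'n) \<Rightarrow> real \<Rightarrow> 'n \<Rightarrow> nat \<Rightarrow> real"
    and \<theta> :: "nat \<Rightarrow> nat \<Rightarrow> real"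
    and xstar :: "real^'n"
  assumes players: "\<forall>j. pl j \<in> {1..N}"
    and nonempty_blocks: "\<forall>i\<in>{1..N}. \<exists>j. pl j = i"
    and convex: "\<forall>i\<in>{1..N}. \<forall>x. convex_on UNIV (\<lambda>y. f i (upd pl i x y))"
    and C1: "\<forall>i\<in>{1..N}. \<forall>x. \<exists>G. continuous_on UNIV G \<and>
               (\<forall>y. ((\<lambda>z. f i (upd pl i x z)) has_derivative (\<lambda>h. G y \<bullet> h)) (at y))"
    and strongly_monotone: "\<exists>\<mu>>0. \<forall>x x'.
               (x - x') \<bullet> (pseudograd f pl x - pseudograd f pl x') \<ge> \<mu> * (norm (x - x'))\<^sup>2"
    and NE: "nash_eq N f pl xstar"
    and r_pos: "\<forall>i\<in>{1..N}. r i \<ge> 1"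
    and c0: "\<forall>i\<in>{1..N}. r i \<ge> 2 \<longrightarrow> c i 0 = 1"
    and hurwitz: "\<forall>i\<in>{1..N}. hurwitz_monic (r i - 1) (c i)"
    and g_dep: "\<forall>i\<in>{1..N}. \<forall>xi xi' t. (\<forall>k<r i. \<forall>j. pl j = i \<longrightarrow> xi k $ j = xi' k $ j)
               \<longrightarrow> g i xi t = g i xi' t"
    and g_cont: "\<forall>i\<in>{1..N}. \<forall>xi j l. continuous_on {0..} (\<lambda>t. g i xi t j l)"
    and g_lip: "\<forall>i\<in>{1..N}. \<forall>xi0. \<exists>\<delta>>0. \<exists>L. \<forall>t\<ge>0. \<forall>xi xi'.
               xi_dist pl r i xi xi0 < \<delta> \<and> xi_dist pl r i xi' xi0 < \<delta> \<longrightarrow>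
               gmat_dist pl m i (g i xi t) (g i xi' t) \<le> L * xi_dist pl r i xi xi'"
  shows
    \<comment> \<open>(x*, 0) is an equilibrium: the constant state x = x*, all derivatives 0 solves the closed loop\<close>
    "cl_solution f pl r c m g \<theta> (\<lambda>k t. if k = 0 then xstar else 0)
     \<and> gam pl r c (\<lambda>k. if k = 0 then xstar else 0) = xstar
     \<comment> \<open>uniqueness: any solution with constant (gamma, x^s) sits at (x*, 0)\<close>
     \<and> (\<forall>X. cl_solution f pl r c m g \<theta> X
            \<and> (\<forall>t\<ge>0. gam pl r c (\<lambda>k. X k t) = gam pl r c (\<lambda>k. X k 0)
                     \<and> (\<forall>j. \<forall>k\<in>{1..<r (pl j)}. X k t $ j = X k 0 $ j))
          \<longrightarrow> gam pl r c (\<lambda>k. X k 0) = xstar \<and> (\<forall>j. \<forall>k\<in>{1..<r (pl j)}. X k 0 $ j = 0))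
     \<comment> \<open>global exponential stability in the (gamma, x^s) coordinates\<close>
     \<and> (\<exists>M a. M > 0 \<and> a > 0 \<and> (\<forall>X. cl_solution f pl r c m g \<theta> X \<longrightarrow>
          (\<forall>t\<ge>0. coord_err pl r c xstar (\<lambda>k. X k t)
                   \<le> M * exp (- a * t) * coord_err pl r c xstar (\<lambda>k. X k 0))))"
proof -
  have rp: "\<forall>j. r (pl j) \<ge> 1" using players r_pos by blast
  have c0': "\<forall>j. r (pl j) \<ge> 2 \<longrightarrow> c (pl j) 0 = 1" using players c0 by blast
  have hw: "\<forall>j. hurwitz_monic (r (pl j) - 1) (c (pl j))" using players hurwitz by blast
  have F0: "pseudograd f pl xstar = 0" by (rule F_zero[OF players C1 NE])
  obtain \<mu> where mu: "\<mu> > 0" and mono: "\<forall>x x'. (x - x') \<bullet> (pseudograd f pl x - pseudograd f pl x') \<ge> \<mu> * (norm (x - x'))\<^sup>2"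
    using strongly_monotone by blast
  define X0 where "X0 = (\<lambda>(k::nat) (t::real). if k = 0 then xstar else (0::real^'n))"
  have G: "gam pl r c (\<lambda>k. if k = 0 then xstar else 0) = xstar" by (rule gam_const[of r pl c, OF rp c0'])
  have P1: "cl_solution f pl r c m g \<theta> (\<lambda>k t. if k = 0 then xstar else 0)"
    unfolding cl_solution_def
  proof (intro conjI allI impI)
    fix t :: real and j k assume "0 \<le> t" "k < r (pl j)"
    have "((\<lambda>\<tau>. (if k = 0 then xstar else 0) $ j) has_real_derivative 0) (at t within {0..})"
      by (rule DERIV_const)
    then show "((\<lambda>\<tau>. (if k = 0 then xstar else 0) $ j) has_real_derivative (if Suc k = 0 then xstar else 0) $ j) (at t within {0..})"
      by simp
  next
    fix t :: real assume "0 \<le> t"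
    have r0: "r (pl j) \<noteq> 0" for j using rp by (metis not_one_le_zero)
    have "Ks pl r c (\<lambda>k. if k = 0 then xstar else 0) = 0" unfolding Ks_def by (simp add: vec_eq_iff)
    moreover have "(\<chi> j. (if r (pl j) = 0 then xstar else 0) $ j) = (0::real^'n)"
      by (simp add: vec_eq_iff r0)
    ultimately show "(\<chi> j. (if r (pl j) = 0 then xstar else 0) $ j) + gtheta pl m g \<theta> (\<lambda>k. if k = 0 then xstar else 0) t =
         - pseudograd f pl (gam pl r c (\<lambda>k. if k = 0 then xstar else 0)) + gtheta pl m g \<theta> (\<lambda>k. if k = 0 then xstar else 0) t -
         Ks pl r c (\<lambda>k. if k = 0 then xstar else 0)"
      using G F0 by simp
  qed
  obtain M a where M0: "M > 0" and a0: "a > 0" and ST: "\<forall>X. cl_solution f pl r c m g \<theta> X \<longrightarrow>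
          (\<forall>t\<ge>0. coord_err pl r c xstar (\<lambda>k. X k t)
                   \<le> M * exp (- a * t) * coord_err pl r c xstar (\<lambda>k. X k 0))"
    using stability[OF rp hw mu mono F0, of m g \<theta>] by blast
  have P3: "\<forall>X. cl_solution f pl r c m g \<theta> X
            \<and> (\<forall>t\<ge>0. gam pl r c (\<lambda>k. X k t) = gam pl r c (\<lambda>k. X k 0)
                     \<and> (\<forall>j. \<forall>k\<in>{1..<r (pl j)}. X k t $ j = X k 0 $ j))
          \<longrightarrow> gam pl r c (\<lambda>k. X k 0) = xstar \<and> (\<forall>j. \<forall>k\<in>{1..<r (pl j)}. X k 0 $ j = 0)"
  proof (intro allI impI)
    fix X assume H: "cl_solution f pl r c m g \<theta> X
            \<and> (\<forall>t\<ge>0. gam pl r c (\<lambda>k. X k t) = gam pl r c (\<lambda>k. X k 0)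
                     \<and> (\<forall>j. \<forall>k\<in>{1..<r (pl j)}. X k t $ j = X k 0 $ j))"
    define t where "t = (\<bar>ln M\<bar> + 1) / a"
    have t0: "t \<ge> 0" unfolding t_def using a0 by (intro divide_nonneg_pos) auto
    have Hx: "\<forall>j. \<forall>k\<in>{1..<r (pl j)}. X k t $ j = X k 0 $ j" and Hg: "gam pl r c (\<lambda>k. X k t) = gam pl r c (\<lambda>k. X k 0)"
      using H t0 by blast+
    have "xs_sq pl r (\<lambda>k. X k t) = xs_sq pl r (\<lambda>k. X k 0)"
      unfolding xs_sq_def by (intro sum.cong refl) (use Hx in simp)
    then have same: "coord_err pl r c xstar (\<lambda>k. X k t) = coord_err pl r c xstar (\<lambda>k. X k 0)"
      unfolding coord_err_def Hg by simp
    have at: "- a * t = - (\<bar>ln M\<bar> + 1)" unfolding t_def using a0 by simp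
    have "M * exp (- a * t) = exp (ln M) * exp (- (\<bar>ln M\<bar> + 1))" unfolding at using M0 by simp
    also have "\<dots> = exp (ln M - (\<bar>ln M\<bar> + 1))" by (simp add: exp_add[symmetric])
    also have "\<dots> < 1" by simp
    finally have q: "M * exp (- a * t) < 1" .
    define E0 where "E0 = coord_err pl r c xstar (\<lambda>k. X k 0)"
    have E00: "E0 \<ge> 0" unfolding E0_def by (rule coord_err_nonneg)
    have "E0 \<le> M * exp (- a * t) * E0" using ST H t0 same unfolding E0_def by metis
    then have "E0 = 0" using q E00 by (metis mult_less_cancel_right2 not_le order_antisym)
    then have z: "(norm (gam pl r c (\<lambda>k. X k 0) - xstar))\<^sup>2 + xs_sq pl r (\<lambda>k. X k 0) = 0"
      unfolding E0_def coord_err_def by simp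
    have xs0: "xs_sq pl r (\<lambda>k. X k 0) \<ge> 0" by (rule xs_sq_nonneg)
    have n0: "(norm (gam pl r c (\<lambda>k. X k 0) - xstar))\<^sup>2 = 0" and x0: "xs_sq pl r (\<lambda>k. X k 0) = 0"
      using z xs0 by (smt (verit) zero_le_power2)+
    show "gam pl r c (\<lambda>k. X k 0) = xstar \<and> (\<forall>j. \<forall>k\<in>{1..<r (pl j)}. X k 0 $ j = 0)"
    proof
      show "gam pl r c (\<lambda>k. X k 0) = xstar" using n0 by simp
      show "\<forall>j. \<forall>k\<in>{1..<r (pl j)}. X k 0 $ j = 0"
      proof (intro allI ballI)
        fix j k assume k: "k \<in> {1..<r (pl j)}"
        have "(\<Sum>k\<in>{1..<r (pl j)}. (X k 0 $ j)\<^sup>2) = 0"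
          using x0 unfolding xs_sq_def by (subst (asm) sum_nonneg_eq_0_iff) (auto intro: sum_nonneg)
        then have "(X k 0 $ j)\<^sup>2 = 0" using k by (subst (asm) sum_nonneg_eq_0_iff) auto
        then show "X k 0 $ j = 0" by simp
      qed
    qed
  qed
  show ?thesis using P1 G P3 M0 a0 ST by blast
qed

end
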